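(* Under the setup in the context, fix $z_0\in E$ and work under $\mathbb{P}_{z_0}$ (so $Z_0=z_0$). For $0\le s<t<T$ and $x,y\in E$ define \[ q(s,x;t,y\mid z_0):=\frac{\tilde p_{t-s}(x,y)\displaystyle\int_E\frac{\tilde p_{T-t}(y,z)}{\tilde p_T(z_0,z)}\,\nu(dz)}{\displaystyle\int_E\frac{\tilde p_{T-s}(x,z')}{\tilde p_T(z_0,z')}\,\nu(dz')} \] (assuming these integrals are finite). Then for $0\le s<t<T$, \[ \mathbb{P}_{z_0}(Z_t\in dy\mid\mathcal{F}^Z_s)=\mathbb{P}_{z_0}(Z_t\in dy\mid Z_s,Z_0)=q(s,Z_s;t,y\mid Z_0)\,m(dy). \] Moreover, for fixed $z_0$, $q$ satisfies the Chapman–Kolmogorov identity \[ q(s,x;u,z\mid z_0)=\int_E q(s,x;t,y\mid z_0)\,q(t,y;u,z\mid z_0)\,m(dy) \] for all $0<s<t<u<T$ and $x,z\in E$.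
   Context: Setup (randomised Markov bridge). Let $E\subset\mathbb{R}^n$ be a Borel set and $T\in(0,\infty)$. Let $Y=(Y_t)$ be an $E$-valued strong Markov process with càdlàg paths, realised as the coordinate process on $\Omega^1_T$, the space of right-continuous paths $[0,T)\to E$ with left limits on $(0,T)$. Let $\tilde{\mathbb{P}}^1_y$ be its law when started at $y\in E$, and $(\mathcal{F}^1_t)$ its natural filtration, $\mathcal{F}^1_{T-}:=\sigma(\cup_{t<T}\mathcal{F}^1_t)$. Assume the transition probabilities have densities $\tilde P_t(x,dy)=\tilde p_t(x,y)\,m(dy)$ with respect to a $\sigma$-finite measure $m$ on $E$, satisfying the Chapman–Kolmogorov identity $\tilde p_{t+s}(x,z)=\int_E\tilde p_t(x,y)\tilde p_s(y,z)\,m(dy)$ for $s,t>0$, $s+t\le T$, and $\tilde p_t(x,y)>0$ for all $(t,x,y)\in(0,T]\times E\times E$. Let $X$ be an $E$-valued random variable on a probability space $(\Omega_2,\mathcal{F}_2,\mathbb{P}_2)$ with law $\nu$. Set $\Omega:=\Omega^1_T\times\Omega_2$, $\mathcal{F}_t:=\mathcal{F}^1_t\otimes\mathcal{F}_2$, $\mathcal{F}_{T-}:=\mathcal{F}^1_{T-}\otimes\mathcal{F}_2$, and for $y\in E$ let $\mathbb{P}_y$ be the probability measure on $(\Omega,\mathcal{F}_{T-})$ such that for every $t\in[0,T)$, \[ d\mathbb{P}_y\big|_{\mathcal{F}_t}=\Lambda_t^{(y,T,X)}\,d(\tilde{\mathbb{P}}^1_y\otimes\mathbb{P}_2)\big|_{\mathcal{F}_t},\qquad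 \Lambda_t^{(y,T,X)}(\omega_1,\omega_2):=\frac{\tilde p_{T-t}(Y_t(\omega_1),X(\omega_2))}{\tilde p_T(y,X(\omega_2))}. \] The randomised Markov bridge is $Z_t(\omega_1,\omega_2):=Y_t(\omega_1)$ for $t\in[0,T)$ and $Z_T:=X(\omega_2)$; $\mathcal{F}^Z_t:=\sigma(Z_s;s\in[0,t])$. *)

theory Defs
  imports "HOL-Probability.Probability"
begin

definition path_space :: "'a::topological_space set \<Rightarrow> real \<Rightarrow> (real \<Rightarrow> 'a) set" where
  "path_space E T = {\<omega>. (\<forall>t. t \<notin> {0..<T} \<longrightarrow> \<omega> t = undefined)
      \<and> (\<forall>t\<in>{0..<T}. \<omega> t \<in> E)
      \<and> (\<forall>t\<in>{0..<T}. continuous (at_right t) \<omega>)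
      \<and> (\<forall>t\<in>{0<..<T}. \<exists>l. (\<omega> \<longlongrightarrow> l) (at_left t))}"

definition coord_sigma :: "'a::topological_space set \<Rightarrow> real \<Rightarrow> real set \<Rightarrow> (real \<Rightarrow> 'a) measure" where
  "coord_sigma E T I = sigma (path_space E T)
     {{\<omega> \<in> path_space E T. \<omega> r \<in> B} | r B. r \<in> I \<and> B \<in> sets borel}"

definition gen_sigma :: "'w set \<Rightarrow> (real \<Rightarrow> 'w \<Rightarrow> 'a::topological_space) \<Rightarrow> real set \<Rightarrow> 'w measure" where
  "gen_sigma Om Z I = sigma Om {{\<omega> \<in> Om. Z r \<omega> \<in> B} | r B. r \<in> I \<and> B \<in> sets borel}"

definition rmb_Z :: "real \<Rightarrow> ('b \<Rightarrow> 'a) \<Rightarrow> real \<Rightarrow> (real \<Rightarrow> 'a) \<times> 'b \<Rightarrow> 'a" where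
  "rmb_Z T X t \<omega> = (if t < T then fst \<omega> t else X (snd \<omega>))"

definition rmb_h :: "(real \<Rightarrow> 'a \<Rightarrow> 'a \<Rightarrow> real) \<Rightarrow> real \<Rightarrow> 'a measure \<Rightarrow> 'a \<Rightarrow> real \<Rightarrow> 'a \<Rightarrow> real" where
  "rmb_h p T \<nu> z0 r x = (\<integral>z. p (T - r) x z / p T z0 z \<partial>\<nu>)"

definition rmb_q :: "(real \<Rightarrow> 'a \<Rightarrow> 'a \<Rightarrow> real) \<Rightarrow> real \<Rightarrow> 'a measure \<Rightarrow> 'a
    \<Rightarrow> real \<Rightarrow> 'a \<Rightarrow> real \<Rightarrow> 'a \<Rightarrow> real" where
  "rmb_q p T \<nu> z0 s x t y = p (t - s) x y * rmb_h p T \<nu> z0 t y / rmb_h p T \<nu> z0 s x"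

end

theory Submission
  imports Defs
begin
locale rmb =
  fixes E :: "'a::euclidean_space set" and T :: real and m :: "'a measure"
    and p :: "real \<Rightarrow> 'a \<Rightarrow> 'a \<Rightarrow> real"
    and Ptil :: "'a \<Rightarrow> (real \<Rightarrow> 'a) measure"
    and M2 :: "'b measure" and X :: "'b \<Rightarrow> 'a"
    and P :: "((real \<Rightarrow> 'a) \<times> 'b) measure" and z0 :: 'a
  assumes E: "E \<in> sets borel" and T: "0 < T"
    and m_sets: "sets m = sets (restrict_space borel E)"
    and m_sfin: "sigma_finite_measure m"
    and p_meas: "\<forall>t\<in>{0<..T}. (\<lambda>(x, y). p t x y) \<in> borel_measurable (m \<Otimes>\<^sub>M m)"
    and p_pos: "\<forall>t\<in>{0<..T}. \<forall>x\<in>E. \<forall>y\<in>E. p t x y > 0"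
    and p_CK: "\<forall>s t x z. 0 < s \<longrightarrow> 0 < t \<longrightarrow> s + t \<le> T \<longrightarrow> x \<in> E \<longrightarrow> z \<in> E \<longrightarrow>
        ennreal (p (t + s) x z) = (\<integral>\<^sup>+ y. ennreal (p t x y * p s y z) \<partial>m)"
    and Ptil_prob: "\<forall>y\<in>E. prob_space (Ptil y)"
    and Ptil_sets: "\<forall>y\<in>E. sets (Ptil y) = sets (coord_sigma E T {0..<T})"
    and Ptil_init: "\<forall>y\<in>E. AE \<omega> in Ptil y. \<omega> 0 = y"
    and Ptil_Markov: "\<forall>y\<in>E. \<forall>s t. 0 \<le> s \<longrightarrow> s < t \<longrightarrow> t < T \<longrightarrow>
        (\<forall>A\<in>sets (coord_sigma E T {0..s}). \<forall>B\<in>sets m.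
           emeasure (Ptil y) (A \<inter> {\<omega> \<in> path_space E T. \<omega> t \<in> B})
             = (\<integral>\<^sup>+ \<omega>. (\<integral>\<^sup>+ z. ennreal (p (t - s) (\<omega> s) z) * indicator B z \<partial>m)
                       * indicator A \<omega> \<partial>Ptil y))"
    and M2: "prob_space M2"
    and X: "X \<in> measurable M2 m"
    and z0: "z0 \<in> E"
    and P_prob: "prob_space P"
    and P_sets: "sets P = sets (coord_sigma E T {0..<T} \<Otimes>\<^sub>M M2)"
    and P_dens: "\<forall>t\<in>{0..<T}. \<forall>A\<in>sets (coord_sigma E T {0..t} \<Otimes>\<^sub>M M2).
        emeasure P A = (\<integral>\<^sup>+ \<omega>. ennreal (p (T - t) (fst \<omega> t) (X (snd \<omega>)) / p T z0 (X (snd \<omega>)))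
                                * indicator A \<omega> \<partial>(Ptil z0 \<Otimes>\<^sub>M M2))"
    and finite: "\<forall>r\<in>{0..<T}. \<forall>x\<in>E. integrable (distr M2 m X) (\<lambda>z. p (T - r) x z / p T z0 z)"
begin
abbreviation "\<nu> \<equiv> distr M2 m X"
lemma space_m: "space m = E"
  using sets_eq_imp_space_eq[OF m_sets] by (simp add: space_restrict_space)

lemma sets_nu: "sets \<nu> = sets m" by simp
lemma space_nu: "space \<nu> = E" by (simp add: space_m)
lemma nu_prob: "prob_space \<nu>"
  by (rule prob_space.prob_space_distr[OF M2 X])
lemma m_sets': "sets m = sets (restrict_space borel E)" by (rule m_sets)

lemma pmeas:
  assumes "\<tau> \<in> {0<..T}" "f \<in> measurable M m" "g \<in> measurable M m"
  shows "(\<lambda>\<omega>. p \<tau> (f \<omega>) (g \<omega>)) \<in> borel_measurable M"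
proof -
  have "(\<lambda>\<omega>. (f \<omega>, g \<omega>)) \<in> measurable M (m \<Otimes>\<^sub>M m)" using assms by measurable
  from measurable_compose[OF this p_meas[rule_format, OF assms(1)]] show ?thesis by simp
qed

lemma const_m: "x \<in> E \<Longrightarrow> (\<lambda>_. x) \<in> measurable M m"
  by (rule measurable_const) (simp add: space_m)

lemma pT_meas: "p T z0 \<in> borel_measurable m"
proof -
  have "(\<lambda>\<omega>. p T z0 \<omega>) \<in> borel_measurable m"
    by (rule pmeas[of T "\<lambda>_. z0" m "\<lambda>y. y", OF _ const_m[OF z0] measurable_id]) (use T in simp)
  then show ?thesis by (simp add: id_def)
qed

lemma h_integrable: "r \<in> {0..<T} \<Longrightarrow> x \<in> E \<Longrightarrow> integrable \<nu> (\<lambda>z. p (T - r) x z / p T z0 z)"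
  using finite by auto

lemma h_pos:
  assumes r: "r \<in> {0..<T}" and x: "x \<in> E"
  shows "rmb_h p T \<nu> z0 r x > 0"
proof -
  interpret nu: prob_space \<nu> by (rule nu_prob)
  have pos: "\<And>z. z \<in> space \<nu> \<Longrightarrow> p (T - r) x z / p T z0 z > 0"
    using p_pos r x z0 T space_nu by auto
  have nn: "AE z in \<nu>. 0 \<le> p (T - r) x z / p T z0 z"
    by (rule AE_I2) (rule less_imp_le, rule pos)
  have ge: "rmb_h p T \<nu> z0 r x \<ge> 0" unfolding rmb_h_def
    by (rule integral_nonneg_AE[OF nn])
  have "rmb_h p T \<nu> z0 r x \<noteq> 0"
  proof
    assume "rmb_h p T \<nu> z0 r x = 0"
    then have "AE z in \<nu>. p (T - r) x z / p T z0 z = 0"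
      unfolding rmb_h_def
      by (subst (asm) integral_nonneg_eq_0_iff_AE[OF h_integrable[OF r x] nn])
    moreover have "AE z in \<nu>. z \<in> space \<nu>" by (rule AE_space)
    ultimately have "AE z in \<nu>. False"
    proof eventually_elim
      case (elim z) with pos[of z] show False by simp
    qed
    then show False using nu.AE_False by simp
  qed
  with ge show ?thesis by simp
qed

lemma CK_real:
  assumes "0 < a" "0 < b" "a + b \<le> T" "x \<in> E" "z \<in> E"
  shows "integrable m (\<lambda>y. p a x y * p b y z)"
    and "p (a + b) x z = (\<integral>y. p a x y * p b y z \<partial>m)"
proof -
  have m1: "(\<lambda>y. p a x y) \<in> borel_measurable m"
    by (rule pmeas[of a "\<lambda>_. x" m "\<lambda>y. y", OF _ const_m measurable_id]) (use assms in auto)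
  have m2: "(\<lambda>y. p b y z) \<in> borel_measurable m"
    by (rule pmeas[of b "\<lambda>y. y" m "\<lambda>_. z", OF _ measurable_id const_m]) (use assms in auto)
  have meas: "(\<lambda>y. p a x y * p b y z) \<in> borel_measurable m"
    using borel_measurable_times[OF m1 m2] by (simp add: id_def)
  have nn: "\<And>y. y \<in> space m \<Longrightarrow> 0 \<le> p a x y * p b y z"
    using p_pos assms space_m by (auto intro!: mult_nonneg_nonneg less_imp_le)
  have ck: "ennreal (p (a + b) x z) = (\<integral>\<^sup>+ y. ennreal (p a x y * p b y z) \<partial>m)"
    using p_CK assms by auto
  have "(\<integral>\<^sup>+ y. ennreal (norm (p a x y * p b y z)) \<partial>m) = (\<integral>\<^sup>+ y. ennreal (p a x y * p b y z) \<partial>m)"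
    by (rule nn_integral_cong) (use nn in auto)
  then have "(\<integral>\<^sup>+ y. ennreal (norm (p a x y * p b y z)) \<partial>m) = ennreal (p (a + b) x z)"
    using ck by simp
  then show int: "integrable m (\<lambda>y. p a x y * p b y z)"
    using meas by (intro integrableI_bounded) auto
  have "ennreal (\<integral>y. p a x y * p b y z \<partial>m) = (\<integral>\<^sup>+ y. ennreal (p a x y * p b y z) \<partial>m)"
    by (rule nn_integral_eq_integral[symmetric, OF int]) (use nn in \<open>auto intro!: AE_I2\<close>)
  with ck have "ennreal (p (a + b) x z) = ennreal (\<integral>y. p a x y * p b y z \<partial>m)" by simp
  moreover have "0 \<le> p (a + b) x z" using p_pos assms by (auto intro: less_imp_le)
  moreover have "0 \<le> (\<integral>y. p a x y * p b y z \<partial>m)" by (rule integral_nonneg_AE) (use nn in \<open>auto intro!: AE_I2\<close>)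
  ultimately show "p (a + b) x z = (\<integral>y. p a x y * p b y z \<partial>m)" by simp
qed

lemma part2:
  assumes "0 < s" "s < t" "t < u" "u < T" "x \<in> E" "z \<in> E"
  shows "rmb_q p T \<nu> z0 s x u z = (\<integral>y. rmb_q p T \<nu> z0 s x t y * rmb_q p T \<nu> z0 t y u z \<partial>m)"
proof -
  let ?h = "rmb_h p T \<nu> z0"
  have "(\<integral>y. rmb_q p T \<nu> z0 s x t y * rmb_q p T \<nu> z0 t y u z \<partial>m)
      = (\<integral>y. (p (t - s) x y * p (u - t) y z) * (?h u z / ?h s x) \<partial>m)"
  proof (rule Bochner_Integration.integral_cong[OF refl])
    fix y assume "y \<in> space m"
    then have "?h t y > 0" using h_pos[of t y] assms space_m by auto
    then show "rmb_q p T \<nu> z0 s x t y * rmb_q p T \<nu> z0 t y u z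
      = (p (t - s) x y * p (u - t) y z) * (?h u z / ?h s x)"
      unfolding rmb_q_def by (simp add: field_simps)
  qed
  also have "\<dots> = (\<integral>y. p (t - s) x y * p (u - t) y z \<partial>m) * (?h u z / ?h s x)"
    by simp
  also have "(\<integral>y. p (t - s) x y * p (u - t) y z \<partial>m) = p ((t - s) + (u - t)) x z"
    using CK_real(2)[of "t - s" "u - t" x z] assms by simp
  also have "(t - s) + (u - t) = u - s" by simp
  finally show ?thesis unfolding rmb_q_def by simp
qed


lemma coord_gen_Pow: "{{\<omega> \<in> path_space E T. \<omega> r \<in> B} | r B. r \<in> I \<and> B \<in> sets borel} \<subseteq> Pow (path_space E T)"
  by auto

lemma space_C: "space (coord_sigma E T I) = path_space E T"
  unfolding coord_sigma_def by (rule space_measure_of[OF coord_gen_Pow])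

lemma sets_C: "sets (coord_sigma E T I) = sigma_sets (path_space E T) {{\<omega> \<in> path_space E T. \<omega> r \<in> B} | r B. r \<in> I \<and> B \<in> sets borel}"
  unfolding coord_sigma_def by (rule sets_measure_of[OF coord_gen_Pow])

lemma C_mono: "I \<subseteq> J \<Longrightarrow> sets (coord_sigma E T I) \<subseteq> sets (coord_sigma E T J)"
  unfolding sets_C by (rule sigma_sets_mono') blast

lemma coord_in_C: "r \<in> I \<Longrightarrow> B \<in> sets borel \<Longrightarrow> {\<omega> \<in> path_space E T. \<omega> r \<in> B} \<in> sets (coord_sigma E T I)"
  unfolding sets_C by (rule sigma_sets.Basic) blast

lemma coord_borel: "r \<in> I \<Longrightarrow> (\<lambda>\<omega>. \<omega> r) \<in> borel_measurable (coord_sigma E T I)"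
proof (rule measurableI)
  fix B :: "'a set" assume r: "r \<in> I" and "B \<in> sets borel"
  then have "{\<omega> \<in> path_space E T. \<omega> r \<in> B} \<in> sets (coord_sigma E T I)" by (rule coord_in_C)
  moreover have "(\<lambda>\<omega>. \<omega> r) -` B \<inter> space (coord_sigma E T I) = {\<omega> \<in> path_space E T. \<omega> r \<in> B}"
    by (auto simp: space_C)
  ultimately show "(\<lambda>\<omega>. \<omega> r) -` B \<inter> space (coord_sigma E T I) \<in> sets (coord_sigma E T I)" by simp
qed simp

lemma path_E: "\<omega> \<in> path_space E T \<Longrightarrow> 0 \<le> r \<Longrightarrow> r < T \<Longrightarrow> \<omega> r \<in> E"
  unfolding path_space_def by auto

lemma to_m: "f \<in> borel_measurable M \<Longrightarrow> (\<And>x. x \<in> space M \<Longrightarrow> f x \<in> E) \<Longrightarrow> f \<in> measurable M m"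
  by (subst measurable_cong_sets[OF refl m_sets]) (rule measurable_restrict_space2, auto)

lemma coord_m: "r \<in> I \<Longrightarrow> 0 \<le> r \<Longrightarrow> r < T \<Longrightarrow> (\<lambda>\<omega>. \<omega> r) \<in> measurable (coord_sigma E T I) m"
  by (rule to_m[OF coord_borel]) (auto simp: space_C intro: path_E)

lemma space_P: "space P = path_space E T \<times> space M2"
  using sets_eq_imp_space_eq[OF P_sets] by (simp add: space_pair_measure space_C)

lemma sets_N: "sets (Ptil z0 \<Otimes>\<^sub>M M2) = sets (coord_sigma E T {0..<T} \<Otimes>\<^sub>M M2)"
  by (rule sets_pair_measure_cong[OF Ptil_sets[rule_format, OF z0] refl])

lemma space_N: "space (Ptil z0 \<Otimes>\<^sub>M M2) = path_space E T \<times> space M2"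
  using sets_eq_imp_space_eq[OF sets_N] by (simp add: space_pair_measure space_C)

lemma space_S: "space (coord_sigma E T I \<Otimes>\<^sub>M M2) = path_space E T \<times> space M2"
  by (simp add: space_pair_measure space_C)

lemma S_sub: assumes "t < T" shows "sets (coord_sigma E T {0..t} \<Otimes>\<^sub>M M2) \<subseteq> sets (coord_sigma E T {0..<T} \<Otimes>\<^sub>M M2)"
proof -
  have *: "sets (coord_sigma E T {0..t}) \<subseteq> sets (coord_sigma E T {0..<T})"
    by (rule C_mono) (use assms in auto)
  show ?thesis unfolding sets_pair_measure space_C
    by (rule sigma_sets_mono) (use * in blast)
qed

lemma subalg_P: "t < T \<Longrightarrow> subalgebra P (coord_sigma E T {0..t} \<Otimes>\<^sub>M M2)"
  unfolding subalgebra_def using S_sub[of t] P_sets space_P space_S by auto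

lemma subalg_N: "t < T \<Longrightarrow> subalgebra (Ptil z0 \<Otimes>\<^sub>M M2) (coord_sigma E T {0..t} \<Otimes>\<^sub>M M2)"
  unfolding subalgebra_def using S_sub[of t] sets_N space_N space_S by auto

lemma GF_Pow: "{{\<omega> \<in> space P. rmb_Z T X r \<omega> \<in> B} | r B. r \<in> I \<and> B \<in> sets borel} \<subseteq> Pow (space P)"
  by auto

lemma sets_F: "sets (gen_sigma (space P) (rmb_Z T X) I) = sigma_sets (space P) {{\<omega> \<in> space P. rmb_Z T X r \<omega> \<in> B} | r B. r \<in> I \<and> B \<in> sets borel}"
  unfolding gen_sigma_def by (rule sets_measure_of[OF GF_Pow])

lemma space_F: "space (gen_sigma (space P) (rmb_Z T X) I) = space P"
  unfolding gen_sigma_def by (rule space_measure_of[OF GF_Pow])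

lemma F_sets:
  assumes I: "I \<subseteq> {0..s}" and s: "s < T"
    and A: "A \<in> sets (gen_sigma (space P) (rmb_Z T X) I)"
  shows "\<exists>A1\<in>sets (coord_sigma E T {0..s}). A = A1 \<times> space M2"
  using A unfolding sets_F
proof (induct rule: sigma_sets.induct)
  case (Basic a)
  then obtain r B where rB: "a = {\<omega> \<in> space P. rmb_Z T X r \<omega> \<in> B}" "r \<in> I" "B \<in> sets borel" by blast
  then have "r < T" using I s by auto
  then have "a = {\<omega> \<in> path_space E T. \<omega> r \<in> B} \<times> space M2"
    using rB(1) by (auto simp: space_P rmb_Z_def)
  moreover have "{\<omega> \<in> path_space E T. \<omega> r \<in> B} \<in> sets (coord_sigma E T {0..s})"
    by (rule coord_in_C) (use rB I in auto)
  ultimately show ?case by blast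
next
  case Empty
  show ?case by (rule bexI[of _ "{}"]) auto
next
  case (Compl a)
  then obtain A1 where A1: "A1 \<in> sets (coord_sigma E T {0..s})" "a = A1 \<times> space M2" by blast
  have "space P - a = (path_space E T - A1) \<times> space M2" using A1 by (auto simp: space_P)
  moreover have "path_space E T - A1 \<in> sets (coord_sigma E T {0..s})"
    using sets.compl_sets[OF A1(1)] by (simp add: space_C)
  ultimately show ?case by blast
next
  case (Union a)
  then have "\<forall>i. \<exists>A1. A1 \<in> sets (coord_sigma E T {0..s}) \<and> a i = A1 \<times> space M2" by blast
  then obtain f where f: "\<And>i. f i \<in> sets (coord_sigma E T {0..s})" "\<And>i. a i = f i \<times> space M2" by metis
  have "(\<Union>i. a i) = (\<Union>i. f i) \<times> space M2" using f(2) by auto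
  moreover have "(\<Union>i. f i) \<in> sets (coord_sigma E T {0..s})" using f(1) by auto
  ultimately show ?case by blast
qed


lemma F_subalg:
  assumes I: "I \<subseteq> {0..s}" and s: "s < T"
  shows "subalgebra P (gen_sigma (space P) (rmb_Z T X) I)"
  unfolding subalgebra_def
proof
  show "sets (gen_sigma (space P) (rmb_Z T X) I) \<subseteq> sets P"
  proof
    fix A assume "A \<in> sets (gen_sigma (space P) (rmb_Z T X) I)"
    then obtain A1 where A1: "A1 \<in> sets (coord_sigma E T {0..s})" "A = A1 \<times> space M2"
      using F_sets[OF I s] by blast
    have "{0..s} \<subseteq> {0..<T}" using s by auto
    from subsetD[OF C_mono[OF this] A1(1)] have "A1 \<in> sets (coord_sigma E T {0..<T})" .
    then have "A1 \<times> space M2 \<in> sets (coord_sigma E T {0..<T} \<Otimes>\<^sub>M M2)" by auto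
    then show "A \<in> sets P" using A1(2) P_sets by simp
  qed
qed (rule space_F)

lemma F_coord:
  assumes "r \<in> I" "0 \<le> r" "r < T"
  shows "(\<lambda>\<omega>. fst \<omega> r) \<in> measurable (gen_sigma (space P) (rmb_Z T X) I) m"
proof (rule to_m)
  show "(\<lambda>\<omega>. fst \<omega> r) \<in> borel_measurable (gen_sigma (space P) (rmb_Z T X) I)"
  proof (rule measurableI)
    fix B :: "'a set" assume B: "B \<in> sets borel"
    have "(\<lambda>\<omega>. fst \<omega> r) -` B \<inter> space (gen_sigma (space P) (rmb_Z T X) I)
        = {\<omega> \<in> space P. rmb_Z T X r \<omega> \<in> B}"
      using assms by (auto simp: space_F rmb_Z_def)
    also have "\<dots> \<in> sets (gen_sigma (space P) (rmb_Z T X) I)"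
      unfolding sets_F by (rule sigma_sets.Basic) (use assms B in blast)
    finally show "(\<lambda>\<omega>. fst \<omega> r) -` B \<inter> space (gen_sigma (space P) (rmb_Z T X) I) \<in> sets (gen_sigma (space P) (rmb_Z T X) I)" .
  qed simp
  fix \<omega> assume "\<omega> \<in> space (gen_sigma (space P) (rmb_Z T X) I)"
  then have "\<omega> \<in> space P" by (simp only: space_F)
  then show "fst \<omega> r \<in> E" using assms by (auto simp: space_P intro: path_E)
qed

lemma S_fst: "r \<in> I \<Longrightarrow> 0 \<le> r \<Longrightarrow> r < T \<Longrightarrow> (\<lambda>\<omega>. fst \<omega> r) \<in> measurable (coord_sigma E T I \<Otimes>\<^sub>M M2) m"
  using measurable_compose[OF measurable_fst coord_m] by blast

lemma S_X: "(\<lambda>\<omega>. X (snd \<omega>)) \<in> measurable (M1 \<Otimes>\<^sub>M M2) m"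
  using measurable_compose[OF measurable_snd X] by blast

definition Lam :: "real \<Rightarrow> (real \<Rightarrow> 'a) \<times> 'b \<Rightarrow> real" where
  "Lam t \<omega> = p (T - t) (fst \<omega> t) (X (snd \<omega>)) / p T z0 (X (snd \<omega>))"

lemma Lam_meas:
  assumes t: "t \<in> {0..<T}" and f: "(\<lambda>\<omega>. fst \<omega> t) \<in> measurable M m" and g: "(\<lambda>\<omega>. X (snd \<omega>)) \<in> measurable M m"
  shows "(\<lambda>\<omega>. ennreal (Lam t \<omega>)) \<in> borel_measurable M"
proof -
  have a: "(\<lambda>\<omega>. p (T - t) (fst \<omega> t) (X (snd \<omega>))) \<in> borel_measurable M"
    by (rule pmeas[OF _ f g]) (use t in auto)
  have b: "(\<lambda>\<omega>. p T z0 (X (snd \<omega>))) \<in> borel_measurable M"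
    using measurable_compose[OF g pT_meas] .
  have "(\<lambda>\<omega>. Lam t \<omega>) \<in> borel_measurable M"
    unfolding Lam_def by (rule borel_measurable_divide[OF a b])
  from measurable_compose[OF this measurable_ennreal] show ?thesis .
qed

lemma Lam_S: "t \<in> {0..<T} \<Longrightarrow> t \<in> I \<Longrightarrow> (\<lambda>\<omega>. ennreal (Lam t \<omega>)) \<in> borel_measurable (coord_sigma E T I \<Otimes>\<^sub>M M2)"
  by (rule Lam_meas[OF _ S_fst S_X]) auto

lemma dens_eq:
  assumes t: "t \<in> {0..<T}" and f: "f \<in> borel_measurable (coord_sigma E T {0..t} \<Otimes>\<^sub>M M2)"
  shows "(\<integral>\<^sup>+ \<omega>. f \<omega> \<partial>P) = (\<integral>\<^sup>+ \<omega>. ennreal (Lam t \<omega>) * f \<omega> \<partial>(Ptil z0 \<Otimes>\<^sub>M M2))"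
proof -
  let ?S = "coord_sigma E T {0..t} \<Otimes>\<^sub>M M2"
  let ?N = "Ptil z0 \<Otimes>\<^sub>M M2"
  have sP: "subalgebra P ?S" and sN: "subalgebra ?N ?S" using subalg_P subalg_N t by auto
  have Lm: "(\<lambda>\<omega>. ennreal (Lam t \<omega>)) \<in> borel_measurable ?S" by (rule Lam_S) (use t in auto)
  have eq: "restr_to_subalg P ?S = density (restr_to_subalg ?N ?S) (\<lambda>\<omega>. ennreal (Lam t \<omega>))"
  proof (rule measure_eqI)
    show "sets (restr_to_subalg P ?S) = sets (density (restr_to_subalg ?N ?S) (\<lambda>\<omega>. ennreal (Lam t \<omega>)))"
      by (simp add: sets_restr_to_subalg[OF sP] sets_restr_to_subalg[OF sN])
    fix A assume "A \<in> sets (restr_to_subalg P ?S)"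
    then have A: "A \<in> sets ?S" by (simp add: sets_restr_to_subalg[OF sP])
    have "emeasure (restr_to_subalg P ?S) A = emeasure P A" by (rule emeasure_restr_to_subalg[OF sP A])
    also have "\<dots> = (\<integral>\<^sup>+ \<omega>. ennreal (Lam t \<omega>) * indicator A \<omega> \<partial>?N)"
      using P_dens t A unfolding Lam_def by auto
    also have "\<dots> = (\<integral>\<^sup>+ \<omega>. ennreal (Lam t \<omega>) * indicator A \<omega> \<partial>(restr_to_subalg ?N ?S))"
      by (rule nn_integral_subalgebra2[OF sN, symmetric]) (use Lm A in measurable)
    also have "\<dots> = emeasure (density (restr_to_subalg ?N ?S) (\<lambda>\<omega>. ennreal (Lam t \<omega>))) A"
      by (rule emeasure_density[symmetric]) (use Lm A sN in \<open>auto simp: sets_restr_to_subalg intro: measurable_in_subalg\<close>)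
    finally show "emeasure (restr_to_subalg P ?S) A = emeasure (density (restr_to_subalg ?N ?S) (\<lambda>\<omega>. ennreal (Lam t \<omega>))) A" .
  qed
  have "(\<integral>\<^sup>+ \<omega>. f \<omega> \<partial>P) = (\<integral>\<^sup>+ \<omega>. f \<omega> \<partial>restr_to_subalg P ?S)"
    by (rule nn_integral_subalgebra2[OF sP f, symmetric])
  also have "\<dots> = (\<integral>\<^sup>+ \<omega>. ennreal (Lam t \<omega>) * f \<omega> \<partial>restr_to_subalg ?N ?S)"
    unfolding eq by (rule nn_integral_density) (use Lm f sN in \<open>auto intro: measurable_in_subalg\<close>)
  also have "\<dots> = (\<integral>\<^sup>+ \<omega>. ennreal (Lam t \<omega>) * f \<omega> \<partial>?N)"
    by (rule nn_integral_subalgebra2[OF sN]) (use Lm f in measurable)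
  finally show ?thesis .
qed

lemma inner:
  assumes x: "x \<in> E" and r: "r \<in> {0..<T}"
  shows "(\<integral>\<^sup>+ y. ennreal (p (T - r) x (X y) / p T z0 (X y)) \<partial>M2) = ennreal (rmb_h p T \<nu> z0 r x)"
proof -
  have m1: "(\<lambda>z. p (T - r) x z) \<in> borel_measurable m"
    by (rule pmeas[of "T - r" "\<lambda>_. x" m "\<lambda>y. y", OF _ const_m measurable_id]) (use x r in auto)
  have m2: "(\<lambda>z. ennreal (p (T - r) x z / p T z0 z)) \<in> borel_measurable \<nu>"
    using measurable_compose[OF borel_measurable_divide[OF m1 pT_meas] measurable_ennreal]
    by (simp cong: measurable_cong_sets)
  have "(\<integral>\<^sup>+ y. ennreal (p (T - r) x (X y) / p T z0 (X y)) \<partial>M2) = (\<integral>\<^sup>+ z. ennreal (p (T - r) x z / p T z0 z) \<partial>\<nu>)"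
    by (rule nn_integral_distr[OF X m2, symmetric])
  also have "\<dots> = ennreal (rmb_h p T \<nu> z0 r x)" unfolding rmb_h_def
  proof (rule nn_integral_eq_integral[OF h_integrable[OF r x]])
    show "AE z in \<nu>. 0 \<le> p (T - r) x z / p T z0 z"
      by (rule AE_I2) (use p_pos x r z0 T space_nu in \<open>auto intro!: divide_nonneg_pos less_imp_le\<close>)
  qed
  finally show ?thesis .
qed

lemma space_Ptil: "space (Ptil z0) = path_space E T"
  using sets_eq_imp_space_eq[OF Ptil_sets[rule_format, OF z0]] by (simp add: space_C)

lemma tonelli:
  assumes t: "t \<in> {0..<T}" and g: "g \<in> borel_measurable (coord_sigma E T {0..<T})"
  shows "(\<integral>\<^sup>+ \<omega>. ennreal (Lam t \<omega>) * g (fst \<omega>) \<partial>(Ptil z0 \<Otimes>\<^sub>M M2))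
       = (\<integral>\<^sup>+ \<omega>1. ennreal (rmb_h p T \<nu> z0 t (\<omega>1 t)) * g \<omega>1 \<partial>Ptil z0)"
proof -
  interpret M2: prob_space M2 by (rule M2)
  have gP: "g \<in> borel_measurable (Ptil z0)"
    using g by (simp cong: measurable_cong_sets add: Ptil_sets z0)
  have Lm: "(\<lambda>\<omega>. ennreal (Lam t \<omega>)) \<in> borel_measurable (coord_sigma E T {0..<T} \<Otimes>\<^sub>M M2)"
    by (rule Lam_S) (use t in auto)
  have F: "(\<lambda>\<omega>. ennreal (Lam t \<omega>) * g (fst \<omega>)) \<in> borel_measurable (Ptil z0 \<Otimes>\<^sub>M M2)"
    unfolding measurable_cong_sets[OF sets_N refl]
    using Lm measurable_compose[OF measurable_fst g] by measurable
  have "(\<integral>\<^sup>+ \<omega>. ennreal (Lam t \<omega>) * g (fst \<omega>) \<partial>(Ptil z0 \<Otimes>\<^sub>M M2))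
      = (\<integral>\<^sup>+ \<omega>1. \<integral>\<^sup>+ y. ennreal (Lam t (\<omega>1, y)) * g \<omega>1 \<partial>M2 \<partial>Ptil z0)"
    using M2.nn_integral_fst[OF F] by simp
  also have "\<dots> = (\<integral>\<^sup>+ \<omega>1. ennreal (rmb_h p T \<nu> z0 t (\<omega>1 t)) * g \<omega>1 \<partial>Ptil z0)"
  proof (rule nn_integral_cong)
    fix \<omega>1 assume "\<omega>1 \<in> space (Ptil z0)"
    then have e: "\<omega>1 t \<in> E" using t by (auto simp: space_Ptil intro: path_E)
    have mm: "(\<lambda>y. ennreal (Lam t (\<omega>1, y))) \<in> borel_measurable M2"
    proof -
      have "(\<lambda>y. (\<omega>1, y)) \<in> measurable M2 (coord_sigma E T {0..<T} \<Otimes>\<^sub>M M2)"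
        by (rule measurable_Pair) (use \<open>\<omega>1 \<in> space (Ptil z0)\<close> in \<open>auto simp: space_C space_Ptil\<close>)
      from measurable_compose[OF this Lm] show ?thesis by simp
    qed
    have "(\<integral>\<^sup>+ y. ennreal (Lam t (\<omega>1, y)) * g \<omega>1 \<partial>M2) = (\<integral>\<^sup>+ y. ennreal (Lam t (\<omega>1, y)) \<partial>M2) * g \<omega>1"
      by (rule nn_integral_multc[OF mm])
    also have "(\<integral>\<^sup>+ y. ennreal (Lam t (\<omega>1, y)) \<partial>M2) = ennreal (rmb_h p T \<nu> z0 t (\<omega>1 t))"
      unfolding Lam_def using inner[OF e t] by simp
    finally show "(\<integral>\<^sup>+ y. ennreal (Lam t (\<omega>1, y)) * g \<omega>1 \<partial>M2) = ennreal (rmb_h p T \<nu> z0 t (\<omega>1 t)) * g \<omega>1" .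
  qed
  finally show ?thesis .
qed


lemma Ptil_meas: "f \<in> measurable (Ptil z0) M \<longleftrightarrow> f \<in> measurable (coord_sigma E T {0..<T}) M"
  using measurable_cong_sets[OF Ptil_sets[rule_format, OF z0] refl, of M] by simp

lemma Ptil_coord: "0 \<le> r \<Longrightarrow> r < T \<Longrightarrow> (\<lambda>\<omega>. \<omega> r) \<in> measurable (Ptil z0) m"
  unfolding Ptil_meas by (rule coord_m) auto

lemma Pz: "prob_space (Ptil z0)" using Ptil_prob z0 by auto

context
  fixes s t A assumes st: "0 \<le> s" "s < t" "t < T" and A: "A \<in> sets (coord_sigma E T {0..s})"
begin

lemma A_P: "A \<in> sets (Ptil z0)"
proof -
  have "{0..s} \<subseteq> {0..<T}" using st by auto
  from subsetD[OF C_mono[OF this] A] show ?thesis using Ptil_sets z0 by auto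
qed

lemma pm2: "(\<lambda>x. ennreal (p (t - s) (fst x s) (snd x))) \<in> borel_measurable (Ptil z0 \<Otimes>\<^sub>M m)"
proof -
  have "(\<lambda>x. p (t - s) (fst x s) (snd x)) \<in> borel_measurable (Ptil z0 \<Otimes>\<^sub>M m)"
    by (rule pmeas[OF _ measurable_compose[OF measurable_fst Ptil_coord] measurable_snd]) (use st in auto)
  from measurable_compose[OF this measurable_ennreal] show ?thesis .
qed

lemma pm3: "(\<lambda>x. ennreal (p (t - s) (snd x s) (fst x))) \<in> borel_measurable (m \<Otimes>\<^sub>M Ptil z0)"
proof -
  have "(\<lambda>x. p (t - s) (snd x s) (fst x)) \<in> borel_measurable (m \<Otimes>\<^sub>M Ptil z0)"
    by (rule pmeas[OF _ measurable_compose[OF measurable_snd Ptil_coord] measurable_fst]) (use st in auto)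
  from measurable_compose[OF this measurable_ennreal] show ?thesis .
qed

lemma pm1: "\<omega> \<in> space (Ptil z0) \<Longrightarrow> (\<lambda>z. ennreal (p (t - s) (\<omega> s) z)) \<in> borel_measurable m"
proof -
  assume "\<omega> \<in> space (Ptil z0)"
  then have e: "\<omega> s \<in> E" using st by (auto simp: space_Ptil intro: path_E)
  have "(\<lambda>z. p (t - s) (\<omega> s) z) \<in> borel_measurable m"
    by (rule pmeas[of "t - s" "\<lambda>_. \<omega> s" m "\<lambda>y. y", OF _ const_m[OF e] measurable_id]) (use st in auto)
  from measurable_compose[OF this measurable_ennreal] show ?thesis .
qed

lemma pm4: "(\<lambda>\<omega>. ennreal (p (t - s) (\<omega> s) z)) \<in> borel_measurable (Ptil z0)" if "z \<in> space m"
proof -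
  have "(\<lambda>\<omega>. p (t - s) (\<omega> s) z) \<in> borel_measurable (Ptil z0)"
    by (rule pmeas[of "t - s" "\<lambda>\<omega>. \<omega> s" _ "\<lambda>_. z", OF _ Ptil_coord const_m]) (use st that space_m in auto)
  from measurable_compose[OF this measurable_ennreal] show ?thesis .
qed

lemma swap:
  assumes g: "g \<in> borel_measurable m"
  shows "(\<integral>\<^sup>+ \<omega>. (\<integral>\<^sup>+ z. ennreal (p (t - s) (\<omega> s) z) * g z \<partial>m) * indicator A \<omega> \<partial>Ptil z0)
       = (\<integral>\<^sup>+ z. (\<integral>\<^sup>+ \<omega>. ennreal (p (t - s) (\<omega> s) z) * indicator A \<omega> \<partial>Ptil z0) * g z \<partial>m)"
proof -
  interpret Pz: prob_space "Ptil z0" by (rule Pz)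
  interpret PM: pair_sigma_finite "Ptil z0" m
    by (intro pair_sigma_finite.intro Pz.sigma_finite_measure_axioms m_sfin)
  have [measurable]: "A \<in> sets (Ptil z0)" by (rule A_P)
  note [measurable] = pm2 g
  have "(\<integral>\<^sup>+ \<omega>. (\<integral>\<^sup>+ z. ennreal (p (t - s) (\<omega> s) z) * g z \<partial>m) * indicator A \<omega> \<partial>Ptil z0)
      = (\<integral>\<^sup>+ \<omega>. (\<integral>\<^sup>+ z. ennreal (p (t - s) (\<omega> s) z) * g z * indicator A \<omega> \<partial>m) \<partial>Ptil z0)"
  proof (rule nn_integral_cong)
    fix \<omega> assume w: "\<omega> \<in> space (Ptil z0)"
    have "(\<lambda>z. ennreal (p (t - s) (\<omega> s) z) * g z) \<in> borel_measurable m"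
      using pm1[OF w] g by measurable
    from nn_integral_multc[OF this, of "indicator A \<omega>"]
    show "(\<integral>\<^sup>+ z. ennreal (p (t - s) (\<omega> s) z) * g z \<partial>m) * indicator A \<omega>
        = (\<integral>\<^sup>+ z. ennreal (p (t - s) (\<omega> s) z) * g z * indicator A \<omega> \<partial>m)" by simp
  qed
  also have "\<dots> = (\<integral>\<^sup>+ z. (\<integral>\<^sup>+ \<omega>. ennreal (p (t - s) (\<omega> s) z) * g z * indicator A \<omega> \<partial>Ptil z0) \<partial>m)"
  proof (rule PM.Fubini'[symmetric])
    show "(\<lambda>(\<omega>, z). ennreal (p (t - s) (\<omega> s) z) * g z * indicator A \<omega>) \<in> borel_measurable (Ptil z0 \<Otimes>\<^sub>M m)"
    proof -
      have "(\<lambda>x. ennreal (p (t - s) (fst x s) (snd x)) * g (snd x) * indicator A (fst x)) \<in> borel_measurable (Ptil z0 \<Otimes>\<^sub>M m)"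
        by measurable
      then show ?thesis by (simp add: case_prod_beta')
    qed
  qed
  also have "\<dots> = (\<integral>\<^sup>+ z. (\<integral>\<^sup>+ \<omega>. ennreal (p (t - s) (\<omega> s) z) * indicator A \<omega> \<partial>Ptil z0) * g z \<partial>m)"
  proof (rule nn_integral_cong)
    fix z assume z: "z \<in> space m"
    have "(\<lambda>\<omega>. ennreal (p (t - s) (\<omega> s) z) * indicator A \<omega>) \<in> borel_measurable (Ptil z0)"
      using pm4[OF z] by measurable
    from nn_integral_multc[OF this, of "g z"]
    show "(\<integral>\<^sup>+ \<omega>. ennreal (p (t - s) (\<omega> s) z) * g z * indicator A \<omega> \<partial>Ptil z0)
        = (\<integral>\<^sup>+ \<omega>. ennreal (p (t - s) (\<omega> s) z) * indicator A \<omega> \<partial>Ptil z0) * g z"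
      by (simp add: ac_simps)
  qed
  finally show ?thesis .
qed


definition "kk z = (\<integral>\<^sup>+ \<omega>. ennreal (p (t - s) (\<omega> s) z) * indicator A \<omega> \<partial>Ptil z0)"

lemma kk_meas: "kk \<in> borel_measurable m"
proof -
  interpret Pz: prob_space "Ptil z0" by (rule Pz)
  have [measurable]: "A \<in> sets (Ptil z0)" by (rule A_P)
  note [measurable] = pm3
  have "(\<lambda>x. ennreal (p (t - s) (snd x s) (fst x)) * indicator A (snd x)) \<in> borel_measurable (m \<Otimes>\<^sub>M Ptil z0)"
    by measurable
  then have "case_prod (\<lambda>z \<omega>. ennreal (p (t - s) (\<omega> s) z) * indicator A \<omega>) \<in> borel_measurable (m \<Otimes>\<^sub>M Ptil z0)"
    by (simp add: case_prod_beta')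
  from Pz.borel_measurable_nn_integral[OF this] show ?thesis unfolding kk_def[abs_def] .
qed

definition "mu1 = distr (density (Ptil z0) (indicator A)) m (\<lambda>\<omega>. \<omega> t)"
definition "mu2 = density m kk"

lemma int1: "f \<in> borel_measurable m \<Longrightarrow> (\<integral>\<^sup>+ z. f z \<partial>mu1) = (\<integral>\<^sup>+ \<omega>. f (\<omega> t) * indicator A \<omega> \<partial>Ptil z0)"
proof -
  assume f: "f \<in> borel_measurable m"
  have ct: "(\<lambda>\<omega>. \<omega> t) \<in> measurable (density (Ptil z0) (indicator A)) m"
    using Ptil_coord[of t] st by (simp cong: measurable_cong_sets)
  have "(\<integral>\<^sup>+ z. f z \<partial>mu1) = (\<integral>\<^sup>+ \<omega>. f (\<omega> t) \<partial>density (Ptil z0) (indicator A))"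
    unfolding mu1_def by (rule nn_integral_distr[OF ct]) (use f in simp)
  also have "\<dots> = (\<integral>\<^sup>+ \<omega>. indicator A \<omega> * f (\<omega> t) \<partial>Ptil z0)"
    by (rule nn_integral_density) (use A_P measurable_compose[OF Ptil_coord[of t] f] st in auto)
  finally show ?thesis by (simp add: mult.commute)
qed

lemma int2: "f \<in> borel_measurable m \<Longrightarrow> (\<integral>\<^sup>+ z. f z \<partial>mu2)
    = (\<integral>\<^sup>+ \<omega>. (\<integral>\<^sup>+ z. ennreal (p (t - s) (\<omega> s) z) * f z \<partial>m) * indicator A \<omega> \<partial>Ptil z0)"
proof -
  assume f: "f \<in> borel_measurable m"
  have "(\<integral>\<^sup>+ z. f z \<partial>mu2) = (\<integral>\<^sup>+ z. kk z * f z \<partial>m)"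
    unfolding mu2_def by (rule nn_integral_density[OF kk_meas f])
  also have "\<dots> = (\<integral>\<^sup>+ \<omega>. (\<integral>\<^sup>+ z. ennreal (p (t - s) (\<omega> s) z) * f z \<partial>m) * indicator A \<omega> \<partial>Ptil z0)"
    unfolding kk_def by (rule swap[OF f, symmetric])
  finally show ?thesis .
qed

lemma mu_eq: "mu1 = mu2"
proof (rule measure_eqI)
  show "sets mu1 = sets mu2" unfolding mu1_def mu2_def by simp
  fix B assume "B \<in> sets mu1"
  then have B: "B \<in> sets m" unfolding mu1_def by simp
  have Bt: "{\<omega> \<in> path_space E T. \<omega> t \<in> B} \<in> sets (Ptil z0)"
  proof -
    have "(\<lambda>\<omega>. \<omega> t) -` B \<inter> space (Ptil z0) \<in> sets (Ptil z0)"
      by (rule measurable_sets[OF Ptil_coord B]) (use st in auto)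
    moreover have "(\<lambda>\<omega>. \<omega> t) -` B \<inter> space (Ptil z0) = {\<omega> \<in> path_space E T. \<omega> t \<in> B}"
      by (auto simp: space_Ptil)
    ultimately show ?thesis by simp
  qed
  have "emeasure mu1 B = (\<integral>\<^sup>+ z. indicator B z \<partial>mu1)"
    using B by (simp add: mu1_def)
  also have "\<dots> = (\<integral>\<^sup>+ \<omega>. indicator B (\<omega> t) * indicator A \<omega> \<partial>Ptil z0)"
    by (rule int1) (use B in simp)
  also have "\<dots> = (\<integral>\<^sup>+ \<omega>. indicator (A \<inter> {\<omega> \<in> path_space E T. \<omega> t \<in> B}) \<omega> \<partial>Ptil z0)"
    by (rule nn_integral_cong) (auto simp: space_Ptil indicator_def)
  also have "\<dots> = emeasure (Ptil z0) (A \<inter> {\<omega> \<in> path_space E T. \<omega> t \<in> B})"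
    using A_P Bt by simp
  also have "\<dots> = (\<integral>\<^sup>+ \<omega>. (\<integral>\<^sup>+ z. ennreal (p (t - s) (\<omega> s) z) * indicator B z \<partial>m) * indicator A \<omega> \<partial>Ptil z0)"
    using Ptil_Markov z0 st A B by auto
  also have "\<dots> = (\<integral>\<^sup>+ z. indicator B z \<partial>mu2)"
    by (rule int2[symmetric]) (use B in simp)
  also have "\<dots> = emeasure mu2 B" using B by (simp add: mu2_def)
  finally show "emeasure mu1 B = emeasure mu2 B" .
qed

lemma markov_ext:
  assumes f: "f \<in> borel_measurable m"
  shows "(\<integral>\<^sup>+ \<omega>. f (\<omega> t) * indicator A \<omega> \<partial>Ptil z0)
       = (\<integral>\<^sup>+ \<omega>. (\<integral>\<^sup>+ z. ennreal (p (t - s) (\<omega> s) z) * f z \<partial>m) * indicator A \<omega> \<partial>Ptil z0)"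
  using int1[OF f] int2[OF f] mu_eq by simp

end


lemma snd_nu: "snd \<in> measurable (M \<Otimes>\<^sub>M \<nu>) m"
  using measurable_snd[of M \<nu>] by (simp cong: measurable_cong_sets)

lemma inner_nu:
  assumes x: "x \<in> E" and r: "r \<in> {0..<T}"
  shows "(\<integral>\<^sup>+ z. ennreal (p (T - r) x z / p T z0 z) \<partial>\<nu>) = ennreal (rmb_h p T \<nu> z0 r x)"
  unfolding rmb_h_def
proof (rule nn_integral_eq_integral[OF h_integrable[OF r x]])
  show "AE z in \<nu>. 0 \<le> p (T - r) x z / p T z0 z"
    by (rule AE_I2) (use p_pos x r z0 T space_nu in \<open>auto intro!: divide_nonneg_pos less_imp_le\<close>)
qed

lemma h_meas:
  assumes r: "r \<in> {0..<T}"
  shows "(\<lambda>x. rmb_h p T \<nu> z0 r x) \<in> borel_measurable m"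
proof -
  interpret nu: prob_space \<nu> by (rule nu_prob)
  have a: "(\<lambda>w. p (T - r) (fst w) (snd w)) \<in> borel_measurable (m \<Otimes>\<^sub>M \<nu>)"
    by (rule pmeas[OF _ measurable_fst snd_nu]) (use r in auto)
  have b: "(\<lambda>w. p T z0 (snd w)) \<in> borel_measurable (m \<Otimes>\<^sub>M \<nu>)"
    using measurable_compose[OF snd_nu pT_meas] .
  have "case_prod (\<lambda>x z. p (T - r) x z / p T z0 z) \<in> borel_measurable (m \<Otimes>\<^sub>M \<nu>)"
    using borel_measurable_divide[OF a b] by (simp add: case_prod_beta')
  from nu.borel_measurable_lebesgue_integral[OF this] show ?thesis unfolding rmb_h_def .
qed

lemma K:
  assumes x: "x \<in> E" and st: "0 \<le> s" "s < t" "t < T"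
  shows "(\<integral>\<^sup>+ y. ennreal (p (t - s) x y * rmb_h p T \<nu> z0 t y) \<partial>m) = ennreal (rmb_h p T \<nu> z0 s x)"
proof -
  interpret nu: prob_space \<nu> by (rule nu_prob)
  interpret PM: pair_sigma_finite m \<nu>
    by (intro pair_sigma_finite.intro nu.sigma_finite_measure_axioms m_sfin)
  let ?\<Phi> = "\<lambda>y z. ennreal (p (t - s) x y * (p (T - t) y z / p T z0 z))"
  have a: "(\<lambda>w. p (t - s) x (fst w)) \<in> borel_measurable (m \<Otimes>\<^sub>M \<nu>)"
    by (rule pmeas[of "t - s" "\<lambda>_. x" _ fst, OF _ const_m[OF x] measurable_fst]) (use st in auto)
  have b: "(\<lambda>w. p (T - t) (fst w) (snd w)) \<in> borel_measurable (m \<Otimes>\<^sub>M \<nu>)"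
    by (rule pmeas[OF _ measurable_fst snd_nu]) (use st in auto)
  have c: "(\<lambda>w. p T z0 (snd w)) \<in> borel_measurable (m \<Otimes>\<^sub>M \<nu>)"
    using measurable_compose[OF snd_nu pT_meas] .
  have Pm: "case_prod ?\<Phi> \<in> borel_measurable (m \<Otimes>\<^sub>M \<nu>)"
    using measurable_compose[OF borel_measurable_times[OF a borel_measurable_divide[OF b c]] measurable_ennreal]
    by (simp add: case_prod_beta')
  have "(\<integral>\<^sup>+ y. ennreal (p (t - s) x y * rmb_h p T \<nu> z0 t y) \<partial>m) = (\<integral>\<^sup>+ y. (\<integral>\<^sup>+ z. ?\<Phi> y z \<partial>\<nu>) \<partial>m)"
  proof (rule nn_integral_cong)
    fix y assume y: "y \<in> space m"
    then have yE: "y \<in> E" by (simp add: space_m)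
    have p0: "0 \<le> p (t - s) x y" using p_pos x yE st by (auto intro: less_imp_le)
    have mm: "(\<lambda>z. ennreal (p (T - t) y z / p T z0 z)) \<in> borel_measurable \<nu>"
    proof -
      have "(\<lambda>z. p (T - t) y z) \<in> borel_measurable m"
        by (rule pmeas[of "T - t" "\<lambda>_. y" m "\<lambda>y. y", OF _ const_m[OF yE] measurable_id]) (use st in auto)
      from measurable_compose[OF borel_measurable_divide[OF this pT_meas] measurable_ennreal]
      show ?thesis by (simp cong: measurable_cong_sets)
    qed
    have "(\<integral>\<^sup>+ z. ?\<Phi> y z \<partial>\<nu>) = (\<integral>\<^sup>+ z. ennreal (p (t - s) x y) * ennreal (p (T - t) y z / p T z0 z) \<partial>\<nu>)"
    proof (rule nn_integral_cong)
      fix z assume "z \<in> space \<nu>"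
      then have "0 \<le> p (T - t) y z / p T z0 z" using p_pos yE z0 st T space_nu by (auto intro!: divide_nonneg_pos less_imp_le)
      then show "?\<Phi> y z = ennreal (p (t - s) x y) * ennreal (p (T - t) y z / p T z0 z)"
        using p0 ennreal_mult[OF p0 \<open>0 \<le> p (T - t) y z / p T z0 z\<close>] by (simp add: times_divide_eq_right)
    qed
    also have "\<dots> = ennreal (p (t - s) x y) * (\<integral>\<^sup>+ z. ennreal (p (T - t) y z / p T z0 z) \<partial>\<nu>)"
      by (rule nn_integral_cmult[OF mm])
    also have "\<dots> = ennreal (p (t - s) x y) * ennreal (rmb_h p T \<nu> z0 t y)"
      using inner_nu[OF yE] st by simp
    also have "\<dots> = ennreal (p (t - s) x y * rmb_h p T \<nu> z0 t y)"
      using p0 h_pos[of t y] yE st by (simp add: ennreal_mult less_imp_le)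
    finally show "ennreal (p (t - s) x y * rmb_h p T \<nu> z0 t y) = (\<integral>\<^sup>+ z. ?\<Phi> y z \<partial>\<nu>)" by simp
  qed
  also have "\<dots> = (\<integral>\<^sup>+ z. (\<integral>\<^sup>+ y. ?\<Phi> y z \<partial>m) \<partial>\<nu>)"
    by (rule PM.Fubini'[OF Pm, symmetric])
  also have "\<dots> = (\<integral>\<^sup>+ z. ennreal (p (T - s) x z / p T z0 z) \<partial>\<nu>)"
  proof (rule nn_integral_cong)
    fix z assume "z \<in> space \<nu>"
    then have zE: "z \<in> E" by (simp add: space_nu space_m)
    have pz: "0 < p T z0 z" using p_pos z0 zE T by auto
    have mm: "(\<lambda>y. ennreal (p (t - s) x y * p (T - t) y z)) \<in> borel_measurable m"
    proof -
      have m1: "(\<lambda>y. p (t - s) x y) \<in> borel_measurable m"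
        by (rule pmeas[of "t - s" "\<lambda>_. x" m "\<lambda>y. y", OF _ const_m[OF x] measurable_id]) (use st in auto)
      have m2: "(\<lambda>y. p (T - t) y z) \<in> borel_measurable m"
        by (rule pmeas[of "T - t" "\<lambda>y. y" m "\<lambda>_. z", OF _ measurable_id const_m[OF zE]]) (use st in auto)
      from measurable_compose[OF borel_measurable_times[OF m1 m2] measurable_ennreal] show ?thesis .
    qed
    have "(\<integral>\<^sup>+ y. ?\<Phi> y z \<partial>m) = (\<integral>\<^sup>+ y. ennreal (p (t - s) x y * p (T - t) y z) * ennreal (1 / p T z0 z) \<partial>m)"
    proof (rule nn_integral_cong)
      fix y assume "y \<in> space m"
      then have yE: "y \<in> E" by (simp add: space_m)
      have "0 \<le> p (t - s) x y * p (T - t) y z" using p_pos x yE zE st by (auto intro!: mult_nonneg_nonneg less_imp_le)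
      then show "?\<Phi> y z = ennreal (p (t - s) x y * p (T - t) y z) * ennreal (1 / p T z0 z)"
        using pz by (simp add: ennreal_mult[symmetric] field_simps)
    qed
    also have "\<dots> = (\<integral>\<^sup>+ y. ennreal (p (t - s) x y * p (T - t) y z) \<partial>m) * ennreal (1 / p T z0 z)"
      by (rule nn_integral_multc[OF mm])
    also have "(\<integral>\<^sup>+ y. ennreal (p (t - s) x y * p (T - t) y z) \<partial>m) = ennreal (p ((t - s) + (T - t)) x z)"
      using p_CK[rule_format, of "T - t" "t - s" x z] st x zE by simp
    also have "(t - s) + (T - t) = T - s" by simp
    also have "ennreal (p (T - s) x z) * ennreal (1 / p T z0 z) = ennreal (p (T - s) x z / p T z0 z)"
      using p_pos x zE st pz by (simp add: ennreal_mult[symmetric] less_imp_le)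
    finally show "(\<integral>\<^sup>+ y. ?\<Phi> y z \<partial>m) = ennreal (p (T - s) x z / p T z0 z)" .
  qed
  also have "\<dots> = ennreal (rmb_h p T \<nu> z0 s x)" by (rule inner_nu[OF x]) (use st in auto)
  finally show ?thesis .
qed


definition GG :: "real \<Rightarrow> real \<Rightarrow> 'a set \<Rightarrow> 'a \<Rightarrow> real" where
  "GG s t B x = set_lebesgue_integral m B (\<lambda>y. rmb_q p T \<nu> z0 s x t y)"

lemma G_meas:
  assumes st: "0 \<le> s" "s < t" "t < T" and B: "B \<in> sets m"
  shows "(\<lambda>x. GG s t B x) \<in> borel_measurable m"
proof -
  interpret ms: sigma_finite_measure m by (rule m_sfin)
  have a: "(\<lambda>w. p (t - s) (fst w) (snd w)) \<in> borel_measurable (m \<Otimes>\<^sub>M m)"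
    by (rule pmeas[OF _ measurable_fst measurable_snd]) (use st in auto)
  have t': "t \<in> {0..<T}" and s': "s \<in> {0..<T}" using st by auto
  have ht: "(\<lambda>w. rmb_h p T \<nu> z0 t (snd w)) \<in> borel_measurable (m \<Otimes>\<^sub>M m)"
    using measurable_compose[OF measurable_snd h_meas[OF t']] .
  have hs: "(\<lambda>w. rmb_h p T \<nu> z0 s (fst w)) \<in> borel_measurable (m \<Otimes>\<^sub>M m)"
    using measurable_compose[OF measurable_fst h_meas[OF s']] .
  note [measurable] = a ht hs B
  have "(\<lambda>w. indicator B (snd w) *\<^sub>R (p (t - s) (fst w) (snd w) * rmb_h p T \<nu> z0 t (snd w) / rmb_h p T \<nu> z0 s (fst w))) \<in> borel_measurable (m \<Otimes>\<^sub>M m)"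
    by measurable
  then have "case_prod (\<lambda>x y. indicator B y *\<^sub>R rmb_q p T \<nu> z0 s x t y) \<in> borel_measurable (m \<Otimes>\<^sub>M m)"
    by (simp add: case_prod_beta' rmb_q_def)
  from ms.borel_measurable_lebesgue_integral[OF this] show ?thesis
    unfolding GG_def set_lebesgue_integral_def .
qed

lemma G_key:
  assumes st: "0 \<le> s" "s < t" "t < T" and B: "B \<in> sets m" and x: "x \<in> E"
  shows "GG s t B x \<ge> 0"
    and "ennreal (GG s t B x) * ennreal (rmb_h p T \<nu> z0 s x)
        = (\<integral>\<^sup>+ y. ennreal (p (t - s) x y) * (indicator B y * ennreal (rmb_h p T \<nu> z0 t y)) \<partial>m)"
proof -
  let ?h = "rmb_h p T \<nu> z0"
  let ?\<phi> = "\<lambda>y. p (t - s) x y * ?h t y"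
  have hsx: "?h s x > 0" using h_pos[of s x] x st by auto
  have nn: "\<And>y. y \<in> space m \<Longrightarrow> 0 \<le> ?\<phi> y"
    using p_pos h_pos x st space_m by (auto intro!: mult_nonneg_nonneg less_imp_le)
  have m1: "(\<lambda>y. p (t - s) x y) \<in> borel_measurable m"
    by (rule pmeas[of "t - s" "\<lambda>_. x" m "\<lambda>y. y", OF _ const_m[OF x] measurable_id]) (use st in auto)
  have phim: "?\<phi> \<in> borel_measurable m"
    using borel_measurable_times[OF m1 h_meas[of t]] st by auto
  have "(\<integral>\<^sup>+ y. ennreal (norm (?\<phi> y)) \<partial>m) = (\<integral>\<^sup>+ y. ennreal (?\<phi> y) \<partial>m)"
    by (rule nn_integral_cong) (use nn in auto)
  also have "\<dots> = ennreal (?h s x)" by (rule K[OF x st])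
  finally have phint: "integrable m ?\<phi>" using phim by (intro integrableI_bounded) auto
  have psint: "integrable m (\<lambda>y. indicator B y *\<^sub>R ?\<phi> y)"
    by (rule integrable_mult_indicator[OF B phint])
  have "GG s t B x = (\<integral>y. (indicator B y *\<^sub>R ?\<phi> y) / ?h s x \<partial>m)"
    unfolding GG_def set_lebesgue_integral_def rmb_q_def
    by (rule Bochner_Integration.integral_cong) auto
  also have "\<dots> = (\<integral>y. indicator B y *\<^sub>R ?\<phi> y \<partial>m) / ?h s x"
    by (rule integral_divide_zero)
  finally have G: "GG s t B x = (\<integral>y. indicator B y *\<^sub>R ?\<phi> y \<partial>m) / ?h s x" .
  have I0: "0 \<le> (\<integral>y. indicator B y *\<^sub>R ?\<phi> y \<partial>m)"
    by (rule integral_nonneg_AE, rule AE_I2) (use nn in \<open>auto simp: indicator_def\<close>)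
  show g0: "GG s t B x \<ge> 0" unfolding G using I0 hsx by simp
  have "ennreal (GG s t B x) * ennreal (?h s x) = ennreal (GG s t B x * ?h s x)"
    using ennreal_mult[OF g0 less_imp_le[OF hsx]] by simp
  also have "GG s t B x * ?h s x = (\<integral>y. indicator B y *\<^sub>R ?\<phi> y \<partial>m)" using G hsx by simp
  also have "ennreal \<dots> = (\<integral>\<^sup>+ y. ennreal (indicator B y *\<^sub>R ?\<phi> y) \<partial>m)"
    by (rule nn_integral_eq_integral[symmetric, OF psint], rule AE_I2) (use nn in \<open>auto simp: indicator_def\<close>)
  also have "\<dots> = (\<integral>\<^sup>+ y. ennreal (p (t - s) x y) * (indicator B y * ennreal (?h t y)) \<partial>m)"
  proof (rule nn_integral_cong)
    fix y assume y: "y \<in> space m"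
    then have "0 \<le> p (t - s) x y" "0 \<le> ?h t y"
      using p_pos h_pos[of t y] x st space_m by (auto intro: less_imp_le)
    then show "ennreal (indicator B y *\<^sub>R ?\<phi> y) = ennreal (p (t - s) x y) * (indicator B y * ennreal (?h t y))"
      by (auto simp: indicator_def ennreal_mult)
  qed
  finally show "ennreal (GG s t B x) * ennreal (?h s x)
        = (\<integral>\<^sup>+ y. ennreal (p (t - s) x y) * (indicator B y * ennreal (?h t y)) \<partial>m)" .
qed


lemma P_fst: "0 \<le> r \<Longrightarrow> r < T \<Longrightarrow> (\<lambda>\<omega>. fst \<omega> r) \<in> measurable P m"
  using S_fst[of r "{0..<T}"] measurable_cong_sets[OF P_sets refl, of m] by simp

lemma A1_P: "A1 \<in> sets (coord_sigma E T {0..s}) \<Longrightarrow> s < T \<Longrightarrow> A1 \<times> space M2 \<in> sets P"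
proof -
  assume A1: "A1 \<in> sets (coord_sigma E T {0..s})" and s: "s < T"
  have "{0..s} \<subseteq> {0..<T}" using s by auto
  from subsetD[OF C_mono[OF this] A1] have "A1 \<times> space M2 \<in> sets (coord_sigma E T {0..<T} \<Otimes>\<^sub>M M2)" by auto
  then show ?thesis using P_sets by simp
qed

lemma main:
  assumes st: "0 \<le> s" "s < t" "t < T" and I: "s \<in> I" "I \<subseteq> {0..s}" and B: "B \<in> sets m"
  shows "AE \<omega> in P. real_cond_exp P (gen_sigma (space P) (rmb_Z T X) I)
            (indicator {\<omega>' \<in> space P. rmb_Z T X t \<omega>' \<in> B}) \<omega> = GG s t B (fst \<omega> s)"
proof -
  let ?F = "gen_sigma (space P) (rmb_Z T X) I"
  let ?S = "{\<omega>' \<in> space P. rmb_Z T X t \<omega>' \<in> B}"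
  let ?f = "indicator ?S :: _ \<Rightarrow> real"
  let ?g = "\<lambda>\<omega>. GG s t B (fst \<omega> s)"
  let ?h = "rmb_h p T \<nu> z0"
  let ?\<Phi> = "\<lambda>A1. (\<integral>\<^sup>+ \<omega>1. (\<integral>\<^sup>+ z. ennreal (p (t - s) (\<omega>1 s) z) * (indicator B z * ennreal (?h t z)) \<partial>m) * indicator A1 \<omega>1 \<partial>Ptil z0)"
  interpret Pp: prob_space P by (rule P_prob)
  have sT: "s < T" using st by simp
  have subF: "subalgebra P ?F" by (rule F_subalg[OF I(2) sT])
  interpret FS: finite_measure_subalgebra P ?F
    by (intro finite_measure_subalgebra.intro finite_measure_subalgebra_axioms.intro Pp.finite_measure_axioms subF)
  have gF: "?g \<in> borel_measurable ?F"
    using measurable_compose[OF F_coord[OF I(1) st(1) sT] G_meas[OF st B]] .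
  have gP: "?g \<in> borel_measurable P" by (rule measurable_from_subalg[OF subF gF])
  have g0: "\<And>\<omega>. \<omega> \<in> space P \<Longrightarrow> 0 \<le> ?g \<omega>"
    using G_key(1)[OF st B] path_E st by (auto simp: space_P)
  have S_eq: "?S = (\<lambda>\<omega>. fst \<omega> t) -` B \<inter> space P" using st by (auto simp: rmb_Z_def)
  have Sm: "?S \<in> sets P" unfolding S_eq by (rule measurable_sets[OF P_fst B]) (use st in auto)
  have fP: "?f \<in> borel_measurable P" using Sm by simp
  have f0: "\<And>\<omega>. 0 \<le> ?f \<omega>" by simp
  have fint: "integrable P ?f"
    by (rule integrable_real_indicator[OF Sm]) (simp add: Pp.emeasure_finite less_top[symmetric])
  have t': "t \<in> {0..<T}" and s': "s \<in> {0..<T}" using st by auto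
  have sub1: "{0..s} \<subseteq> {0..<T}" and sub2: "{0..s} \<subseteq> {0..t}" using st by auto
  have fm: "(\<lambda>z. indicator B z * ennreal (?h t z)) \<in> borel_measurable m"
    using h_meas[OF t'] B by measurable
  have nnL: "(\<integral>\<^sup>+ \<omega>. ennreal (indicator (A1 \<times> space M2) \<omega> * ?f \<omega>) \<partial>P) = ?\<Phi> A1"
    if A1: "A1 \<in> sets (coord_sigma E T {0..s})" for A1
  proof -
    have A1t: "A1 \<in> sets (coord_sigma E T {0..t})" using subsetD[OF C_mono[OF sub2] A1] .
    have A1T: "A1 \<in> sets (coord_sigma E T {0..<T})" using subsetD[OF C_mono[OF sub1] A1] .
    let ?gl = "\<lambda>\<omega>1. ennreal (indicator A1 \<omega>1 * indicator B (\<omega>1 t))"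
    have ctT: "(\<lambda>\<omega>. \<omega> t) \<in> measurable (coord_sigma E T {0..<T}) m" by (rule coord_m) (use st in auto)
    have ctS: "(\<lambda>\<omega>. fst \<omega> t) \<in> measurable (coord_sigma E T {0..t} \<Otimes>\<^sub>M M2) m" by (rule S_fst) (use st in auto)
    have glm: "?gl \<in> borel_measurable (coord_sigma E T {0..<T})"
      using ctT A1T B by measurable
    have glS: "(\<lambda>\<omega>. ?gl (fst \<omega>)) \<in> borel_measurable (coord_sigma E T {0..t} \<Otimes>\<^sub>M M2)"
      using ctS A1t B by measurable
    have "(\<integral>\<^sup>+ \<omega>. ennreal (indicator (A1 \<times> space M2) \<omega> * ?f \<omega>) \<partial>P) = (\<integral>\<^sup>+ \<omega>. ?gl (fst \<omega>) \<partial>P)"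
      by (rule nn_integral_cong) (use st in \<open>auto simp: space_P rmb_Z_def indicator_def\<close>)
    also have "\<dots> = (\<integral>\<^sup>+ \<omega>. ennreal (Lam t \<omega>) * ?gl (fst \<omega>) \<partial>(Ptil z0 \<Otimes>\<^sub>M M2))"
      by (rule dens_eq[OF t' glS])
    also have "\<dots> = (\<integral>\<^sup>+ \<omega>1. ennreal (?h t (\<omega>1 t)) * ?gl \<omega>1 \<partial>Ptil z0)"
      by (rule tonelli[OF t' glm])
    also have "\<dots> = (\<integral>\<^sup>+ \<omega>1. (\<lambda>z. indicator B z * ennreal (?h t z)) (\<omega>1 t) * indicator A1 \<omega>1 \<partial>Ptil z0)"
      by (rule nn_integral_cong) (auto simp: indicator_def)
    also have "\<dots> = ?\<Phi> A1"
      by (rule markov_ext[OF st A1 fm])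
    finally show ?thesis .
  qed
  have nnR: "(\<integral>\<^sup>+ \<omega>. ennreal (indicator (A1 \<times> space M2) \<omega> * ?g \<omega>) \<partial>P) = ?\<Phi> A1"
    if A1: "A1 \<in> sets (coord_sigma E T {0..s})" for A1
  proof -
    have A1T: "A1 \<in> sets (coord_sigma E T {0..<T})" using subsetD[OF C_mono[OF sub1] A1] .
    let ?gr = "\<lambda>\<omega>1. ennreal (indicator A1 \<omega>1 * GG s t B (\<omega>1 s))"
    have csT: "(\<lambda>\<omega>. \<omega> s) \<in> measurable (coord_sigma E T {0..<T}) m" by (rule coord_m) (use st in auto)
    have csS: "(\<lambda>\<omega>. fst \<omega> s) \<in> measurable (coord_sigma E T {0..s} \<Otimes>\<^sub>M M2) m" by (rule S_fst) (use st in auto)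
    have Gm: "(\<lambda>x. GG s t B x) \<in> borel_measurable m" by (rule G_meas[OF st B])
    have grm: "?gr \<in> borel_measurable (coord_sigma E T {0..<T})"
      using measurable_compose[OF csT Gm] A1T by measurable
    have grS: "(\<lambda>\<omega>. ?gr (fst \<omega>)) \<in> borel_measurable (coord_sigma E T {0..s} \<Otimes>\<^sub>M M2)"
      using measurable_compose[OF csS Gm] A1 by measurable
    have "(\<integral>\<^sup>+ \<omega>. ennreal (indicator (A1 \<times> space M2) \<omega> * ?g \<omega>) \<partial>P) = (\<integral>\<^sup>+ \<omega>. ?gr (fst \<omega>) \<partial>P)"
      by (rule nn_integral_cong) (auto simp: space_P indicator_def)
    also have "\<dots> = (\<integral>\<^sup>+ \<omega>. ennreal (Lam s \<omega>) * ?gr (fst \<omega>) \<partial>(Ptil z0 \<Otimes>\<^sub>M M2))"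
      by (rule dens_eq[OF s' grS])
    also have "\<dots> = (\<integral>\<^sup>+ \<omega>1. ennreal (?h s (\<omega>1 s)) * ?gr \<omega>1 \<partial>Ptil z0)"
      by (rule tonelli[OF s' grm])
    also have "\<dots> = ?\<Phi> A1"
    proof (rule nn_integral_cong)
      fix \<omega>1 assume "\<omega>1 \<in> space (Ptil z0)"
      then have x: "\<omega>1 s \<in> E" using st by (auto simp: space_Ptil intro: path_E)
      show "ennreal (?h s (\<omega>1 s)) * ?gr \<omega>1
          = (\<integral>\<^sup>+ z. ennreal (p (t - s) (\<omega>1 s) z) * (indicator B z * ennreal (?h t z)) \<partial>m) * indicator A1 \<omega>1"
        using G_key(2)[OF st B x] by (cases "\<omega>1 \<in> A1") (simp_all add: mult.commute)
    qed
    finally show ?thesis .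
  qed
  have setint: "(\<integral>\<omega>\<in>A1 \<times> space M2. Fn \<omega> \<partial>P) = enn2real (\<integral>\<^sup>+ \<omega>. ennreal (indicator (A1 \<times> space M2) \<omega> * Fn \<omega>) \<partial>P)"
    if A1: "A1 \<in> sets (coord_sigma E T {0..s})" and Fm: "Fn \<in> borel_measurable P"
      and F0: "\<And>\<omega>. \<omega> \<in> space P \<Longrightarrow> 0 \<le> Fn \<omega>" for A1 and Fn :: "_ \<Rightarrow> real"
  proof -
    have AP: "A1 \<times> space M2 \<in> sets P" by (rule A1_P[OF A1 sT])
    have "(\<integral>\<omega>\<in>A1 \<times> space M2. Fn \<omega> \<partial>P) = (\<integral>\<omega>. indicator (A1 \<times> space M2) \<omega> * Fn \<omega> \<partial>P)"
      unfolding set_lebesgue_integral_def by simp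
    also have "\<dots> = enn2real (\<integral>\<^sup>+ \<omega>. ennreal (indicator (A1 \<times> space M2) \<omega> * Fn \<omega>) \<partial>P)"
      by (rule integral_eq_nn_integral) (use AP Fm F0 in \<open>auto intro!: AE_I2 simp: indicator_def\<close>)
    finally show ?thesis .
  qed
  have top: "path_space E T \<in> sets (coord_sigma E T {0..s})"
    using sets.top[of "coord_sigma E T {0..s}"] by (simp add: space_C)
  have gint: "integrable P ?g"
  proof (rule integrableI_bounded[OF gP])
    have "(\<integral>\<^sup>+ \<omega>. ennreal (norm (?g \<omega>)) \<partial>P) = (\<integral>\<^sup>+ \<omega>. ennreal (indicator (path_space E T \<times> space M2) \<omega> * ?g \<omega>) \<partial>P)"
      by (rule nn_integral_cong) (use g0 in \<open>auto simp: space_P\<close>)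
    also have "\<dots> = (\<integral>\<^sup>+ \<omega>. ennreal (indicator (path_space E T \<times> space M2) \<omega> * ?f \<omega>) \<partial>P)"
      using nnL[OF top] nnR[OF top] by simp
    also have "\<dots> \<le> (\<integral>\<^sup>+ \<omega>. 1 \<partial>P)"
      by (rule nn_integral_mono) (auto simp: indicator_def)
    also have "\<dots> = 1" by (simp add: Pp.emeasure_space_1)
    finally show "(\<integral>\<^sup>+ \<omega>. ennreal (norm (?g \<omega>)) \<partial>P) < \<infinity>" by (simp add: le_less_trans)
  qed
  show ?thesis
  proof (rule FS.real_cond_exp_charact[OF _ fint gint gF])
    fix A assume "A \<in> sets ?F"
    then obtain A1 where A1: "A1 \<in> sets (coord_sigma E T {0..s})" "A = A1 \<times> space M2"
      using F_sets[OF I(2) sT] by blast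
    have e1: "(\<integral>x\<in>A1 \<times> space M2. ?f x \<partial>P) = enn2real (\<integral>\<^sup>+ \<omega>. ennreal (indicator (A1 \<times> space M2) \<omega> * ?f \<omega>) \<partial>P)"
      by (rule setint[OF A1(1) fP]) simp
    have e2: "(\<integral>x\<in>A1 \<times> space M2. ?g x \<partial>P) = enn2real (\<integral>\<^sup>+ \<omega>. ennreal (indicator (A1 \<times> space M2) \<omega> * ?g \<omega>) \<partial>P)"
      by (rule setint[OF A1(1) gP g0])
    show "(\<integral>x\<in>A. ?f x \<partial>P) = (\<integral>x\<in>A. ?g x \<partial>P)"
      unfolding A1(2) e1 e2 nnL[OF A1(1)] nnR[OF A1(1)] ..
  qed
qed


lemma AE_z0: "AE \<omega> in P. fst \<omega> 0 = z0"
proof -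
  let ?B1 = "{\<omega> \<in> path_space E T. \<omega> 0 \<in> - {z0}}"
  have B1: "?B1 \<in> sets (coord_sigma E T {0..0})"
    by (rule coord_in_C) auto
  have t0: "(0::real) \<in> {0..<T}" using T by auto
  have AS: "?B1 \<times> space M2 \<in> sets (coord_sigma E T {0..0} \<Otimes>\<^sub>M M2)" using B1 by auto
  have "emeasure P (?B1 \<times> space M2) = (\<integral>\<^sup>+ \<omega>. ennreal (Lam 0 \<omega>) * indicator (?B1 \<times> space M2) \<omega> \<partial>(Ptil z0 \<Otimes>\<^sub>M M2))"
    using P_dens[rule_format, OF t0 AS] unfolding Lam_def by simp
  also have "\<dots> = (\<integral>\<^sup>+ \<omega>. ennreal (Lam 0 \<omega>) * indicator ?B1 (fst \<omega>) \<partial>(Ptil z0 \<Otimes>\<^sub>M M2))"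
    by (rule nn_integral_cong) (auto simp: space_N indicator_def)
  also have "\<dots> = (\<integral>\<^sup>+ \<omega>1. ennreal (rmb_h p T \<nu> z0 0 (\<omega>1 0)) * indicator ?B1 \<omega>1 \<partial>Ptil z0)"
  proof (rule tonelli[OF t0])
    have "?B1 \<in> sets (coord_sigma E T {0..<T})" by (rule coord_in_C) (use T in auto)
    then show "indicator ?B1 \<in> borel_measurable (coord_sigma E T {0..<T})" by simp
  qed
  also have "\<dots> = (\<integral>\<^sup>+ \<omega>1. 0 \<partial>Ptil z0)"
  proof (rule nn_integral_cong_AE)
    have "AE \<omega> in Ptil z0. \<omega> 0 = z0" using Ptil_init z0 by auto
    then show "AE \<omega>1 in Ptil z0. ennreal (rmb_h p T \<nu> z0 0 (\<omega>1 0)) * indicator ?B1 \<omega>1 = 0"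
      by eventually_elim (simp add: indicator_def)
  qed
  finally have "emeasure P (?B1 \<times> space M2) = 0" by simp
  moreover have "?B1 \<times> space M2 \<in> sets P" by (rule A1_P[OF B1]) (use T in simp)
  ultimately have N: "?B1 \<times> space M2 \<in> null_sets P" by auto
  show ?thesis
    by (rule AE_I'[OF N]) (auto simp: space_P)
qed

lemma final:
  shows "(\<forall>s t. 0 \<le> s \<longrightarrow> s < t \<longrightarrow> t < T \<longrightarrow> (\<forall>B\<in>sets m.
            (AE \<omega> in P. real_cond_exp P (gen_sigma (space P) (rmb_Z T X) {0..s})
                 (indicator {\<omega>' \<in> space P. rmb_Z T X t \<omega>' \<in> B}) \<omega>
               = set_lebesgue_integral m B
                   (\<lambda>y. rmb_q p T (distr M2 m X) (rmb_Z T X 0 \<omega>) s (rmb_Z T X s \<omega>) t y))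
          \<and> (AE \<omega> in P. real_cond_exp P (gen_sigma (space P) (rmb_Z T X) {0, s})
                 (indicator {\<omega>' \<in> space P. rmb_Z T X t \<omega>' \<in> B}) \<omega>
               = set_lebesgue_integral m B
                   (\<lambda>y. rmb_q p T (distr M2 m X) (rmb_Z T X 0 \<omega>) s (rmb_Z T X s \<omega>) t y))))
       \<and> (\<forall>s t u x z. 0 < s \<longrightarrow> s < t \<longrightarrow> t < u \<longrightarrow> u < T \<longrightarrow> x \<in> E \<longrightarrow> z \<in> E \<longrightarrow>
            rmb_q p T (distr M2 m X) z0 s x u z
              = (\<integral>y. rmb_q p T (distr M2 m X) z0 s x t y * rmb_q p T (distr M2 m X) z0 t y u z \<partial>m))"

proof (intro conjI allI impI ballI)
  fix s t x z u :: real
  show "rmb_q p T \<nu> z0 s x u z = (\<integral>y. rmb_q p T \<nu> z0 s x t y * rmb_q p T \<nu> z0 t y u z \<partial>m)"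
    if "0 < s" "s < t" "t < u" "u < T" "x \<in> E" "z \<in> E" for s t u x z
    by (rule part2[OF that])
next
  fix s t :: real and B assume st: "0 \<le> s" "s < t" "t < T" and B: "B \<in> sets m"
  have tr: "AE \<omega> in P. GG s t B (fst \<omega> s) = set_lebesgue_integral m B
                   (\<lambda>y. rmb_q p T \<nu> (rmb_Z T X 0 \<omega>) s (rmb_Z T X s \<omega>) t y)"
    using AE_z0 proof eventually_elim
    case (elim \<omega>)
    then show ?case using st T by (simp add: GG_def rmb_Z_def)
  qed
  show "AE \<omega> in P. real_cond_exp P (gen_sigma (space P) (rmb_Z T X) {0..s})
                 (indicator {\<omega>' \<in> space P. rmb_Z T X t \<omega>' \<in> B}) \<omega>
               = set_lebesgue_integral m B
                   (\<lambda>y. rmb_q p T \<nu> (rmb_Z T X 0 \<omega>) s (rmb_Z T X s \<omega>) t y)"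
  proof -
    have M1: "AE \<omega> in P. real_cond_exp P (gen_sigma (space P) (rmb_Z T X) {0..s})
            (indicator {\<omega>' \<in> space P. rmb_Z T X t \<omega>' \<in> B}) \<omega> = GG s t B (fst \<omega> s)"
      by (rule main[OF st _ _ B]) (use st in auto)
    from M1 tr show ?thesis by eventually_elim simp
  qed
  show "AE \<omega> in P. real_cond_exp P (gen_sigma (space P) (rmb_Z T X) {0, s})
                 (indicator {\<omega>' \<in> space P. rmb_Z T X t \<omega>' \<in> B}) \<omega>
               = set_lebesgue_integral m B
                   (\<lambda>y. rmb_q p T \<nu> (rmb_Z T X 0 \<omega>) s (rmb_Z T X s \<omega>) t y)"
  proof -
    have M1: "AE \<omega> in P. real_cond_exp P (gen_sigma (space P) (rmb_Z T X) {0, s})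
            (indicator {\<omega>' \<in> space P. rmb_Z T X t \<omega>' \<in> B}) \<omega> = GG s t B (fst \<omega> s)"
      by (rule main[OF st _ _ B]) (use st in auto)
    from M1 tr show ?thesis by eventually_elim simp
  qed
qed

end

theorem proposition2p2:
  fixes E :: "'a::euclidean_space set" and T :: real and m :: "'a measure"
    and p :: "real \<Rightarrow> 'a \<Rightarrow> 'a \<Rightarrow> real"
    and Ptil :: "'a \<Rightarrow> (real \<Rightarrow> 'a) measure"
    and M2 :: "'b measure" and X :: "'b \<Rightarrow> 'a"
    and P :: "((real \<Rightarrow> 'a) \<times> 'b) measure" and z0 :: 'a
  assumes E: "E \<in> sets borel" and T: "0 < T"
    and m_sets: "sets m = sets (restrict_space borel E)"
    and m_sfin: "sigma_finite_measure m"
    and p_meas: "\<forall>t\<in>{0<..T}. (\<lambda>(x, y). p t x y) \<in> borel_measurable (m \<Otimes>\<^sub>M m)"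
    and p_pos: "\<forall>t\<in>{0<..T}. \<forall>x\<in>E. \<forall>y\<in>E. p t x y > 0"
    and p_CK: "\<forall>s t x z. 0 < s \<longrightarrow> 0 < t \<longrightarrow> s + t \<le> T \<longrightarrow> x \<in> E \<longrightarrow> z \<in> E \<longrightarrow>
        ennreal (p (t + s) x z) = (\<integral>\<^sup>+ y. ennreal (p t x y * p s y z) \<partial>m)"
    and Ptil_prob: "\<forall>y\<in>E. prob_space (Ptil y)"
    and Ptil_sets: "\<forall>y\<in>E. sets (Ptil y) = sets (coord_sigma E T {0..<T})"
    and Ptil_init: "\<forall>y\<in>E. AE \<omega> in Ptil y. \<omega> 0 = y"
    and Ptil_Markov: "\<forall>y\<in>E. \<forall>s t. 0 \<le> s \<longrightarrow> s < t \<longrightarrow> t < T \<longrightarrow>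
        (\<forall>A\<in>sets (coord_sigma E T {0..s}). \<forall>B\<in>sets m.
           emeasure (Ptil y) (A \<inter> {\<omega> \<in> path_space E T. \<omega> t \<in> B})
             = (\<integral>\<^sup>+ \<omega>. (\<integral>\<^sup>+ z. ennreal (p (t - s) (\<omega> s) z) * indicator B z \<partial>m)
                       * indicator A \<omega> \<partial>Ptil y))"
    and M2: "prob_space M2"
    and X: "X \<in> measurable M2 m"
    and z0: "z0 \<in> E"
    and P_prob: "prob_space P"
    and P_sets: "sets P = sets (coord_sigma E T {0..<T} \<Otimes>\<^sub>M M2)"
    and P_dens: "\<forall>t\<in>{0..<T}. \<forall>A\<in>sets (coord_sigma E T {0..t} \<Otimes>\<^sub>M M2).
        emeasure P A = (\<integral>\<^sup>+ \<omega>. ennreal (p (T - t) (fst \<omega> t) (X (snd \<omega>)) / p T z0 (X (snd \<omega>)))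
                                * indicator A \<omega> \<partial>(Ptil z0 \<Otimes>\<^sub>M M2))"
    and finite: "\<forall>r\<in>{0..<T}. \<forall>x\<in>E. integrable (distr M2 m X) (\<lambda>z. p (T - r) x z / p T z0 z)"
  shows "(\<forall>s t. 0 \<le> s \<longrightarrow> s < t \<longrightarrow> t < T \<longrightarrow> (\<forall>B\<in>sets m.
            (AE \<omega> in P. real_cond_exp P (gen_sigma (space P) (rmb_Z T X) {0..s})
                 (indicator {\<omega>' \<in> space P. rmb_Z T X t \<omega>' \<in> B}) \<omega>
               = set_lebesgue_integral m B
                   (\<lambda>y. rmb_q p T (distr M2 m X) (rmb_Z T X 0 \<omega>) s (rmb_Z T X s \<omega>) t y))
          \<and> (AE \<omega> in P. real_cond_exp P (gen_sigma (space P) (rmb_Z T X) {0, s})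
                 (indicator {\<omega>' \<in> space P. rmb_Z T X t \<omega>' \<in> B}) \<omega>
               = set_lebesgue_integral m B
                   (\<lambda>y. rmb_q p T (distr M2 m X) (rmb_Z T X 0 \<omega>) s (rmb_Z T X s \<omega>) t y))))
       \<and> (\<forall>s t u x z. 0 < s \<longrightarrow> s < t \<longrightarrow> t < u \<longrightarrow> u < T \<longrightarrow> x \<in> E \<longrightarrow> z \<in> E \<longrightarrow>
            rmb_q p T (distr M2 m X) z0 s x u z
              = (\<integral>y. rmb_q p T (distr M2 m X) z0 s x t y * rmb_q p T (distr M2 m X) z0 t y u z \<partial>m))"
proof -
  interpret rmb E T m p Ptil M2 X P z0 by (rule rmb.intro) (fact assms)+
  show ?thesis by (rule final)
qed

end
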